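(* Let $q$ be a self-join-free Boolean conjunctive query, let $q_0\subseteq q$, let $\mathbf{db}$ be a database, and let $\mathbf{o}$ be a garbage set for $q_0$ in $\mathbf{db}$. If every garbage set for $q_0$ in $\mathbf{db}\setminus\mathbf{o}$ is empty, then $\mathbf{o}$ is the maximal (with respect to $\subseteq$) garbage set for $q_0$ in $\mathbf{db}$.
   Context: Every relation name has a signature $[n,k]$ ($1\le k\le n$; primary-key positions $1,\dots,k$) and a mode in $\{\mathsf{c},\mathsf{i}\}$. Facts are variable-free atoms; facts are key-equal if same relation name and same primary-key values. A database is a finite set of facts with no two distinct key-equal facts of mode $\mathsf{c}$, all of whose relation names occur in $q$. The block of a fact $A$ in $\mathbf{db}$ is the set of facts of $\mathbf{db}$ key-equal to $A$. A repair of a set of facts is a maximal subset without two distinct key-equal facts. A self-join-free Boolean conjunctive query is a finite set of atoms with distinct relation names; for a fact $A$, $\mathrm{atom}(A)$ is the atom of $q$ with the same relation name. A subset $\mathbf{o}\subseteq\mathbf{db}$ is a garbage set for $q_0$ in $\mathbf{db}$ if (1) for every $A\in\mathbf{o}$, $\mathrm{atom}(A)\in q_0$ and the block of $A$ in $\mathbf{db}$ is included in $\mathbf{o}$; and (2) there is a repair $\mathbf{r}$ of $\mathbf{o}$ such that for every valuation $\theta$ of the variables of $q$, if $\theta(q)\subseteq(\mathbf{db}\setminus\mathbf{o})\cup\mathbf{r}$ then $\theta(q_0)\cap\mathbf{r}=\emptyset$. Garbage sets are closed under union, so a unique maximal garbage set exists. *)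

theory Defs
  imports Main
begin

datatype ('v, 'c) trm = Var 'v | Cst 'c

type_synonym ('r, 'v, 'c) atom = "'r \<times> ('v, 'c) trm list"
type_synonym ('r, 'c) fact = "'r \<times> 'c list"

datatype mode = ModeC | ModeI

record 'r schema =
  arity :: "'r \<Rightarrow> nat"
  keylen :: "'r \<Rightarrow> nat"
  rmode :: "'r \<Rightarrow> mode"

definition wf_schema :: "'r schema \<Rightarrow> bool" where
  "wf_schema S \<longleftrightarrow> (\<forall>R. 1 \<le> keylen S R \<and> keylen S R \<le> arity S R)"

definition wf_atom :: "'r schema \<Rightarrow> ('r, 'v, 'c) atom \<Rightarrow> bool" where
  "wf_atom S A \<longleftrightarrow> length (snd A) = arity S (fst A)"

definition wf_fact :: "'r schema \<Rightarrow> ('r, 'c) fact \<Rightarrow> bool" where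
  "wf_fact S f \<longleftrightarrow> length (snd f) = arity S (fst f)"

definition sjf_query :: "'r schema \<Rightarrow> ('r, 'v, 'c) atom set \<Rightarrow> bool" where
  "sjf_query S q \<longleftrightarrow> finite q \<and> (\<forall>A\<in>q. wf_atom S A)
     \<and> (\<forall>A\<in>q. \<forall>B\<in>q. fst A = fst B \<longrightarrow> A = B)"

definition key_equal :: "'r schema \<Rightarrow> ('r, 'c) fact \<Rightarrow> ('r, 'c) fact \<Rightarrow> bool" where
  "key_equal S f g \<longleftrightarrow> fst f = fst g \<and>
     take (keylen S (fst f)) (snd f) = take (keylen S (fst g)) (snd g)"

definition database :: "'r schema \<Rightarrow> ('r, 'v, 'c) atom set \<Rightarrow> ('r, 'c) fact set \<Rightarrow> bool" where
  "database S q db \<longleftrightarrow> finite db \<and> (\<forall>f\<in>db. wf_fact S f)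
     \<and> (\<forall>f\<in>db. \<forall>g\<in>db. key_equal S f g \<and> f \<noteq> g \<longrightarrow> rmode S (fst f) \<noteq> ModeC)
     \<and> (\<forall>f\<in>db. \<exists>A\<in>q. fst A = fst f)"

definition block :: "'r schema \<Rightarrow> ('r, 'c) fact set \<Rightarrow> ('r, 'c) fact \<Rightarrow> ('r, 'c) fact set" where
  "block S db A = {B \<in> db. key_equal S A B}"

definition consistent :: "'r schema \<Rightarrow> ('r, 'c) fact set \<Rightarrow> bool" where
  "consistent S r \<longleftrightarrow> (\<forall>f\<in>r. \<forall>g\<in>r. key_equal S f g \<longrightarrow> f = g)"

definition repair :: "'r schema \<Rightarrow> ('r, 'c) fact set \<Rightarrow> ('r, 'c) fact set \<Rightarrow> bool" where
  "repair S s r \<longleftrightarrow> r \<subseteq> s \<and> consistent S r \<and>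
     (\<forall>r'. r \<subseteq> r' \<and> r' \<subseteq> s \<and> consistent S r' \<longrightarrow> r' = r)"

fun val_trm :: "('v \<Rightarrow> 'c) \<Rightarrow> ('v, 'c) trm \<Rightarrow> 'c" where
  "val_trm \<theta> (Var x) = \<theta> x"
| "val_trm \<theta> (Cst c) = c"

definition val_atom :: "('v \<Rightarrow> 'c) \<Rightarrow> ('r, 'v, 'c) atom \<Rightarrow> ('r, 'c) fact" where
  "val_atom \<theta> A = (fst A, map (val_trm \<theta>) (snd A))"

text \<open>Garbage set o for q0 in db (w.r.t. query q).  Condition atom(A) \<in> q0 is
  rendered as: the atom of q with the relation name of A lies in q0.\<close>
definition garbage_set ::
  "'r schema \<Rightarrow> ('r, 'v, 'c) atom set \<Rightarrow> ('r, 'v, 'c) atom set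
    \<Rightarrow> ('r, 'c) fact set \<Rightarrow> ('r, 'c) fact set \<Rightarrow> bool" where
  "garbage_set S q q0 db gs \<longleftrightarrow> gs \<subseteq> db \<and>
     (\<forall>A\<in>gs. (\<exists>\<alpha>\<in>q. fst \<alpha> = fst A \<and> \<alpha> \<in> q0) \<and> block S db A \<subseteq> gs) \<and>
     (\<exists>r. repair S gs r \<and>
        (\<forall>\<theta>. val_atom \<theta> ` q \<subseteq> (db - gs) \<union> r \<longrightarrow> val_atom \<theta> ` q0 \<inter> r = {}))"

end

theory Submission
  imports Defs
begin

lemma key_equal_sym: "key_equal S f g \<Longrightarrow> key_equal S g f"
  unfolding key_equal_def by auto

theorem corollary31:
  fixes S :: "'r schema"
    and q q0 :: "('r, 'v, 'c) atom set"
    and db gs :: "('r, 'c) fact set"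
  assumes "wf_schema S"
    and "sjf_query S q"
    and "q0 \<subseteq> q"
    and "database S q db"
    and "garbage_set S q q0 db gs"
    and "\<forall>o'. garbage_set S q q0 (db - gs) o' \<longrightarrow> o' = {}"
  shows "\<forall>o'. garbage_set S q q0 db o' \<longrightarrow> o' \<subseteq> gs"
proof (intro allI impI)
  fix o' assume go: "garbage_set S q q0 db o'"
  define p where "p = o' - gs"
  have gsdb: "gs \<subseteq> db" and gsbl: "\<And>A. A \<in> gs \<Longrightarrow> block S db A \<subseteq> gs"
    using assms(5) unfolding garbage_set_def by auto
  have odb: "o' \<subseteq> db" and obl: "\<And>A. A \<in> o' \<Longrightarrow> block S db A \<subseteq> o'"
    and oat: "\<And>A. A \<in> o' \<Longrightarrow> (\<exists>\<alpha>\<in>q. fst \<alpha> = fst A \<and> \<alpha> \<in> q0)"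
    using go unfolding garbage_set_def by auto
  obtain r' where rep: "repair S o' r'" and
    th: "\<And>\<theta>. val_atom \<theta> ` q \<subseteq> (db - o') \<union> r' \<Longrightarrow> val_atom \<theta> ` q0 \<inter> r' = {}"
    using go unfolding garbage_set_def by blast
  have sep: False if "f \<in> p" "g \<in> o' \<inter> gs" "key_equal S f g" for f g
  proof -
    have "key_equal S g f" using that(3) by (rule key_equal_sym)
    then have "f \<in> block S db g" using that odb unfolding block_def p_def by auto
    then show False using gsbl[of g] that unfolding p_def by auto
  qed
  have rp: "repair S p (r' \<inter> p)"
    unfolding repair_def
  proof (intro conjI allI impI)
    show "r' \<inter> p \<subseteq> p" by auto
    show "consistent S (r' \<inter> p)" using rep unfolding repair_def consistent_def by auto
    fix r'' assume h: "r' \<inter> p \<subseteq> r'' \<and> r'' \<subseteq> p \<and> consistent S r''"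
    have c: "consistent S (r'' \<union> (r' - p))"
      unfolding consistent_def
    proof (intro ballI impI)
      fix f g assume f: "f \<in> r'' \<union> (r' - p)" and g: "g \<in> r'' \<union> (r' - p)" and k: "key_equal S f g"
      have r'o: "r' \<subseteq> o'" using rep unfolding repair_def by auto
      show "f = g"
      proof (cases "f \<in> r''")
        case True
        show ?thesis
        proof (cases "g \<in> r''")
          case True then show ?thesis using h \<open>f \<in> r''\<close> k unfolding consistent_def by auto
        next
          case False
          then have "g \<in> o' \<inter> gs" using g r'o unfolding p_def by auto
          moreover have "f \<in> p" using h True by auto
          ultimately show ?thesis using sep k by blast
        qed
      next
        case False
        show ?thesis
        proof (cases "g \<in> r''")
          case True
          have "f \<in> o' \<inter> gs" using False f r'o unfolding p_def by auto
          moreover have "g \<in> p" using h True by auto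
          ultimately show ?thesis using sep key_equal_sym k by blast
        next
          case False
          then show ?thesis using \<open>f \<notin> r''\<close> f g k rep unfolding repair_def consistent_def by auto
        qed
      qed
    qed
    have r'o2: "r' \<subseteq> o'" using rep unfolding repair_def by auto
    have s1: "r' \<subseteq> r'' \<union> (r' - p)" using h by blast
    have s2: "r'' \<union> (r' - p) \<subseteq> o'" using h r'o2 unfolding p_def by blast
    have "r'' \<union> (r' - p) = r'"
      using rep s1 s2 c unfolding repair_def by blast
    then show "r'' = r' \<inter> p" using h by blast
  qed
  have "garbage_set S q q0 (db - gs) p"
    unfolding garbage_set_def
  proof (intro conjI)
    show "p \<subseteq> db - gs" using odb unfolding p_def by auto
    show "\<forall>A\<in>p. (\<exists>\<alpha>\<in>q. fst \<alpha> = fst A \<and> \<alpha> \<in> q0) \<and> block S (db - gs) A \<subseteq> p"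
    proof
      fix A assume "A \<in> p"
      then have "A \<in> o'" unfolding p_def by auto
      moreover have "block S (db - gs) A \<subseteq> block S db A" unfolding block_def by auto
      ultimately show "(\<exists>\<alpha>\<in>q. fst \<alpha> = fst A \<and> \<alpha> \<in> q0) \<and> block S (db - gs) A \<subseteq> p"
        using oat obl[of A] unfolding p_def block_def by auto
    qed
    show "\<exists>r. repair S p r \<and> (\<forall>\<theta>. val_atom \<theta> ` q \<subseteq> (db - gs - p) \<union> r \<longrightarrow> val_atom \<theta> ` q0 \<inter> r = {})"
    proof (intro exI conjI allI impI)
      show "repair S p (r' \<inter> p)" by (rule rp)
      fix \<theta> assume "val_atom \<theta> ` q \<subseteq> (db - gs - p) \<union> (r' \<inter> p)"
      then have "val_atom \<theta> ` q \<subseteq> (db - o') \<union> r'" unfolding p_def by auto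
      then have "val_atom \<theta> ` q0 \<inter> r' = {}" by (rule th)
      then show "val_atom \<theta> ` q0 \<inter> (r' \<inter> p) = {}" by blast
    qed
  qed
  then have "p = {}" using assms(6) by auto
  then show "o' \<subseteq> gs" unfolding p_def by auto
qed

end
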